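(* Let $A$ be a real alternative $^*$-algebra (not necessarily of finite dimension). For each $x\in C_A$: (1) $n(x)=n(x^c)$; (2) if $x\neq 0$ then $x$ is invertible and $x^{-1}=n(x)^{-1}x^c$; (3) $(x,x^c,y)=0$ for all $y\in A$; (4) $n(xy)=n(x)n(y)=n(y)n(x)=n(yx)$ for all $y\in C_A$. As a consequence, $C_A$ and $N_A$ are closed under multiplication and $C_A^*:=C_A\setminus\{0\}$, $N_A^*:=N_A\setminus\{0\}$ are multiplicative loops.
   Context: A real alternative $^*$-algebra is a real vector space $A$ with a bilinear product and a unit $1$ (with $\mathbb{R}$ identified with $\mathbb{R}1$) such that the associator $(x,y,z)=(xy)z-x(yz)$ is an alternating function, equipped with a $^*$-involution $x\mapsto x^c$, i.e. a real linear map with $(x^c)^c=x$, $(xy)^c=y^cx^c$ and $r^c=r$ for $r\in\mathbb{R}$. The norm is $n(x)=xx^c$. The nucleus of $A$ is $\{r\in A:(r,x,y)=0\ \forall x,y\in A\}$ and the center is $\{r$ in the nucleus$: rx=xr\ \forall x\in A\}$. The normal cone is $N_A=\{0\}\cup\{x\in A: n(x),n(x^c)\in\mathbb{R}\setminus\{0\}\}$ and the central cone is $C_A=\{0\}\cup\{x\in A: n(x),n(x^c)$ are invertible elements of the center of $A\}$. *)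

theory Defs
  imports Complex_Main
begin

text \<open>A real alternative star-algebra on a real vector space 'a, given by an explicit
 product mul, unit e and involution cj.  The real numbers are identified with
 the line of multiples r *R e.\<close>

definition assoc :: "('a::real_vector \<Rightarrow> 'a \<Rightarrow> 'a) \<Rightarrow> 'a \<Rightarrow> 'a \<Rightarrow> 'a \<Rightarrow> 'a" where
  "assoc mul x y z = mul (mul x y) z - mul x (mul y z)"

definition alt_star_alg :: "('a::real_vector \<Rightarrow> 'a \<Rightarrow> 'a) \<Rightarrow> 'a \<Rightarrow> ('a \<Rightarrow> 'a) \<Rightarrow> bool" where
  "alt_star_alg mul e cj \<longleftrightarrow>
     \<comment> \<open>bilinearity of the product\<close>
     (\<forall>x y z. mul (x + y) z = mul x z + mul y z) \<and>
     (\<forall>x y z. mul x (y + z) = mul x y + mul x z) \<and>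
     (\<forall>r x y. mul (r *\<^sub>R x) y = r *\<^sub>R mul x y) \<and>
     (\<forall>r x y. mul x (r *\<^sub>R y) = r *\<^sub>R mul x y) \<and>
     \<comment> \<open>unit, with R identified with R e (so e is nonzero)\<close>
     e \<noteq> 0 \<and>
     (\<forall>x. mul e x = x \<and> mul x e = x) \<and>
     \<comment> \<open>the associator is alternating\<close>
     (\<forall>x y. assoc mul x x y = 0 \<and> assoc mul x y x = 0 \<and> assoc mul y x x = 0) \<and>
     \<comment> \<open>star-involution\<close>
     (\<forall>x y. cj (x + y) = cj x + cj y) \<and>
     (\<forall>r x. cj (r *\<^sub>R x) = r *\<^sub>R cj x) \<and>
     (\<forall>x. cj (cj x) = x) \<and>
     (\<forall>x y. cj (mul x y) = mul (cj y) (cj x)) \<and>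
     (\<forall>r. cj (r *\<^sub>R e) = r *\<^sub>R e)"

definition nrm :: "('a \<Rightarrow> 'a \<Rightarrow> 'a) \<Rightarrow> ('a \<Rightarrow> 'a) \<Rightarrow> 'a \<Rightarrow> 'a" where
  "nrm mul cj x = mul x (cj x)"

definition nucleus :: "('a::real_vector \<Rightarrow> 'a \<Rightarrow> 'a) \<Rightarrow> 'a set" where
  "nucleus mul = {r. \<forall>x y. assoc mul r x y = 0}"

definition center :: "('a::real_vector \<Rightarrow> 'a \<Rightarrow> 'a) \<Rightarrow> 'a set" where
  "center mul = {r \<in> nucleus mul. \<forall>x. mul r x = mul x r}"

definition is_inverse :: "('a \<Rightarrow> 'a \<Rightarrow> 'a) \<Rightarrow> 'a \<Rightarrow> 'a \<Rightarrow> 'a \<Rightarrow> bool" where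
  "is_inverse mul e x y \<longleftrightarrow> mul x y = e \<and> mul y x = e"

definition invertible_el :: "('a \<Rightarrow> 'a \<Rightarrow> 'a) \<Rightarrow> 'a \<Rightarrow> 'a \<Rightarrow> bool" where
  "invertible_el mul e x \<longleftrightarrow> (\<exists>y. is_inverse mul e x y)"

text \<open>The inverse x^-1 (meaningful when the two-sided inverse is unique).\<close>
definition inv_el :: "('a \<Rightarrow> 'a \<Rightarrow> 'a) \<Rightarrow> 'a \<Rightarrow> 'a \<Rightarrow> 'a" where
  "inv_el mul e x = (THE y. is_inverse mul e x y)"

definition center_units :: "('a::real_vector \<Rightarrow> 'a \<Rightarrow> 'a) \<Rightarrow> 'a \<Rightarrow> 'a set" where
  "center_units mul e = {r \<in> center mul. \<exists>s \<in> center mul. is_inverse mul e r s}"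

definition normal_cone :: "('a::real_vector \<Rightarrow> 'a \<Rightarrow> 'a) \<Rightarrow> 'a \<Rightarrow> ('a \<Rightarrow> 'a) \<Rightarrow> 'a set" where
  "normal_cone mul e cj = {0} \<union>
     {x. nrm mul cj x \<in> {r *\<^sub>R e | r. r \<noteq> 0} \<and> nrm mul cj (cj x) \<in> {r *\<^sub>R e | r. r \<noteq> 0}}"

definition central_cone :: "('a::real_vector \<Rightarrow> 'a \<Rightarrow> 'a) \<Rightarrow> 'a \<Rightarrow> ('a \<Rightarrow> 'a) \<Rightarrow> 'a set" where
  "central_cone mul e cj = {0} \<union>
     {x. nrm mul cj x \<in> center_units mul e \<and> nrm mul cj (cj x) \<in> center_units mul e}"

definition is_loop :: "'a set \<Rightarrow> ('a \<Rightarrow> 'a \<Rightarrow> 'a) \<Rightarrow> bool" where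
  "is_loop L f \<longleftrightarrow>
     (\<forall>a\<in>L. \<forall>b\<in>L. f a b \<in> L) \<and>
     (\<exists>u\<in>L. \<forall>a\<in>L. f u a = a \<and> f a u = a) \<and>
     (\<forall>a\<in>L. \<forall>b\<in>L. (\<exists>!x. x \<in> L \<and> f a x = b) \<and> (\<exists>!y. y \<in> L \<and> f y a = b))"

end

theory Submission
  imports Defs
begin

locale asa =
  fixes mul :: "'a::real_vector \<Rightarrow> 'a \<Rightarrow> 'a" (infixl "\<odot>" 70)
    and e :: 'a and cj :: "'a \<Rightarrow> 'a"
  assumes A: "alt_star_alg mul e cj"
begin

abbreviation as where "as \<equiv> assoc mul"

lemma mul_add_left: "(x + y) \<odot> z = x \<odot> z + y \<odot> z" using A[unfolded alt_star_alg_def, THEN conjunct1] by blast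
lemma mul_add_right: "x \<odot> (y + z) = x \<odot> y + x \<odot> z" using A unfolding alt_star_alg_def by blast
lemma mul_scale_left: "(r *\<^sub>R x) \<odot> y = r *\<^sub>R (x \<odot> y)" using A unfolding alt_star_alg_def by blast
lemma mul_scale_right: "x \<odot> (r *\<^sub>R y) = r *\<^sub>R (x \<odot> y)" using A unfolding alt_star_alg_def by blast
lemma e_nz: "e \<noteq> 0" using A unfolding alt_star_alg_def by blast
lemma e_left[simp]: "e \<odot> x = x" using A unfolding alt_star_alg_def by blast
lemma e_right[simp]: "x \<odot> e = x" using A unfolding alt_star_alg_def by blast
lemma alt1[simp]: "as x x y = 0" using A unfolding alt_star_alg_def by blast
lemma alt2[simp]: "as x y x = 0" using A unfolding alt_star_alg_def by blast
lemma alt3[simp]: "as y x x = 0" using A unfolding alt_star_alg_def by blast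
lemma cj_add: "cj (x + y) = cj x + cj y" using A unfolding alt_star_alg_def by blast
lemma cj_scale: "cj (r *\<^sub>R x) = r *\<^sub>R cj x" using A unfolding alt_star_alg_def by blast
lemma cj_cj[simp]: "cj (cj x) = x" using A unfolding alt_star_alg_def by blast
lemma cj_mul: "cj (x \<odot> y) = cj y \<odot> cj x" using A unfolding alt_star_alg_def by blast
lemma cj_e[simp]: "cj e = e" using A unfolding alt_star_alg_def by (metis scaleR_one)

lemma mul_zero_left[simp]: "0 \<odot> y = 0" using mul_scale_left[of 0 y y] by simp
lemma mul_zero_right[simp]: "y \<odot> 0 = 0" using mul_scale_right[of y 0 y] by simp
lemma mul_minus_left: "(- x) \<odot> y = - (x \<odot> y)" using mul_scale_left[of "-1" x y] by simp
lemma mul_minus_right: "y \<odot> (- x) = - (y \<odot> x)" using mul_scale_right[of y "-1" x] by simp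
lemma mul_diff_left: "(x - y) \<odot> z = x \<odot> z - y \<odot> z"
  using mul_add_left[of x "- y" z] by (simp add: mul_minus_left)
lemma mul_diff_right: "z \<odot> (x - y) = z \<odot> x - z \<odot> y"
  using mul_add_right[of z x "- y"] by (simp add: mul_minus_right)
lemma cj_zero[simp]: "cj 0 = 0" using cj_scale[of 0 0] by simp
lemma cj_minus: "cj (- x) = - cj x" using cj_scale[of "-1" x] by simp
lemma cj_diff: "cj (x - y) = cj x - cj y" using cj_add[of x "- y"] by (simp add: cj_minus)

lemmas mul_lin = mul_add_left mul_add_right mul_scale_left mul_scale_right mul_diff_left mul_diff_right
  mul_minus_left mul_minus_right

lemma as_add1: "as (x + y) z w = as x z w + as y z w"
  unfolding assoc_def mul_add_left mul_add_right by (simp add: algebra_simps)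
lemma as_add2: "as z (x + y) w = as z x w + as z y w"
  unfolding assoc_def mul_add_left mul_add_right by (simp add: algebra_simps)
lemma as_add3: "as z w (x + y) = as z w x + as z w y"
  unfolding assoc_def mul_add_left mul_add_right by (simp add: algebra_simps)
lemma as_diff1: "as (x - y) z w = as x z w - as y z w"
  unfolding assoc_def mul_diff_left mul_diff_right by (simp add: algebra_simps)
lemma as_scale1: "as (r *\<^sub>R x) z w = r *\<^sub>R as x z w"
  unfolding assoc_def mul_scale_left mul_scale_right by (simp add: scaleR_diff_right)
lemma as_zero1[simp]: "as 0 z w = 0" by (simp add: assoc_def)
lemma as_zero2[simp]: "as z 0 w = 0" by (simp add: assoc_def)
lemma as_zero3[simp]: "as z w 0 = 0" by (simp add: assoc_def)

lemma skew12: "as x y z = - as y x z"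
proof -
  have "as (x+y) (x+y) z = as x x z + as x y z + (as y x z + as y y z)" by (simp only: as_add1 as_add2 add_ac)
  hence "as x y z + as y x z = 0" by simp
  thus ?thesis by (simp only: eq_neg_iff_add_eq_0)
qed
lemma skew23: "as x y z = - as x z y"
proof -
  have "as x (y+z) (y+z) = as x y y + as x y z + (as x z y + as x z z)" by (simp only: as_add2 as_add3 add_ac)
  hence "as x y z + as x z y = 0" by simp
  thus ?thesis by (simp only: eq_neg_iff_add_eq_0)
qed
lemma cyc: "as x y z = as y z x" using skew12[of x y z] skew23[of y x z] by simp

lemma teich: "as (w \<odot> x) y z - as w (x \<odot> y) z + as w x (y \<odot> z) = w \<odot> as x y z + as w x y \<odot> z"
  unfolding assoc_def mul_diff_left mul_diff_right by (simp add: algebra_simps)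

lemma x2_id: "as (x \<odot> x) q r = x \<odot> as x q r + as x q r \<odot> x" (is "?X = ?N + ?M")
  and moufang: "as x q (r \<odot> x) = x \<odot> as x q r"
proof -
  have 1: "as (x\<odot>x) q r - as x (x\<odot>q) r + as x x (q\<odot>r) = x \<odot> as x q r + as x x q \<odot> r" by (rule teich)
  have 2: "as (x\<odot>q) r x - as x (q\<odot>r) x + as x q (r\<odot>x) = x \<odot> as q r x + as x q r \<odot> x" by (rule teich)
  have 3: "as (q\<odot>r) x x - as q (r\<odot>x) x + as q r (x\<odot>x) = q \<odot> as r x x + as q r x \<odot> x" by (rule teich)
  have c1: "as x (x\<odot>q) r = as (x\<odot>q) r x" by (rule cyc)
  have c2: "as q r x = as x q r" by (metis cyc)
  have c3: "as q (r\<odot>x) x = as x q (r\<odot>x)" by (metis cyc)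
  have c4: "as q r (x\<odot>x) = as (x\<odot>x) q r" by (metis cyc)
  define P where "P = as (x\<odot>q) r x"
  define Q where "Q = as x q (r\<odot>x)"
  have e1: "?X - P = ?N" using 1 c1 unfolding P_def by simp
  have e2: "P + Q = ?N + ?M" using 2 c2 unfolding P_def Q_def by simp
  have e3: "?X - Q = ?M" using 3 c2 c3 c4 unfolding Q_def by simp
  have x1: "?X = ?N + P" using e1 by (simp add: diff_eq_eq)
  have x3: "?X = ?M + Q" using e3 by (simp add: diff_eq_eq)
  have "?X + ?X = (?N + P) + (?M + Q)" using x1 x3 by simp
  also have "\<dots> = (?N + ?M) + (P + Q)" by (simp add: add_ac)
  also have "\<dots> = (?N + ?M) + (?N + ?M)" using e2 by simp
  finally have "(2::real) *\<^sub>R ?X = 2 *\<^sub>R (?N + ?M)" by (simp add: scaleR_2)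
  hence X: "?X = ?N + ?M" by simp
  thus "?X = ?N + ?M" .
  show "Q = ?N" using X e3 by (simp add: algebra_simps)
qed


lemma as0: "as p q r = 0 \<Longrightarrow> (p \<odot> q) \<odot> r = p \<odot> (q \<odot> r)" by (simp add: assoc_def)

lemma nuc1: "r \<in> nucleus mul \<Longrightarrow> as r x y = 0" unfolding nucleus_def by blast
lemma nuc2: "r \<in> nucleus mul \<Longrightarrow> as x r y = 0" using skew12[of x r y] nuc1 by simp
lemma nuc3: "r \<in> nucleus mul \<Longrightarrow> as x y r = 0" using cyc[of r x y] nuc1 by simp
lemma cen_nuc: "r \<in> center mul \<Longrightarrow> r \<in> nucleus mul" unfolding center_def by blast
lemma cen_comm: "r \<in> center mul \<Longrightarrow> r \<odot> x = x \<odot> r" unfolding center_def by blast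

lemma cm1: assumes "c \<in> center mul" shows "p \<odot> (c \<odot> q) = c \<odot> (p \<odot> q)"
proof -
  have "p \<odot> (c \<odot> q) = (p \<odot> c) \<odot> q" using as0[OF nuc2[OF cen_nuc[OF assms]]] by simp
  also have "\<dots> = (c \<odot> p) \<odot> q" using cen_comm[OF assms] by simp
  also have "\<dots> = c \<odot> (p \<odot> q)" using as0[OF nuc1[OF cen_nuc[OF assms]]] by simp
  finally show ?thesis .
qed
lemma cm2: assumes "c \<in> center mul" shows "(c \<odot> p) \<odot> q = c \<odot> (p \<odot> q)"
  using as0[OF nuc1[OF cen_nuc[OF assms]]] by simp

lemma as_c3: assumes "c \<in> center mul" shows "as p q (c \<odot> w) = c \<odot> as p q w"
  by (simp add: assoc_def cm1[OF assms] mul_diff_right)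
lemma as_c2: assumes "c \<in> center mul" shows "as p (c \<odot> w) q = c \<odot> as p w q"
proof -
  have "as p (c \<odot> w) q = as q p (c \<odot> w)" by (metis cyc)
  also have "\<dots> = c \<odot> as q p w" by (rule as_c3[OF assms])
  also have "as q p w = as p w q" by (metis cyc)
  finally show ?thesis .
qed
lemma as_c1: assumes "c \<in> center mul" shows "as (c \<odot> w) p q = c \<odot> as w p q"
proof -
  have "as (c \<odot> w) p q = as p q (c \<odot> w)" by (metis cyc)
  also have "\<dots> = c \<odot> as p q w" by (rule as_c3[OF assms])
  also have "as p q w = as w p q" by (metis cyc)
  finally show ?thesis .
qed

lemma self_neg: fixes z :: 'a assumes "z = - z" shows "z = 0"
proof -
  have "z + z = 0" using assms by (metis add.right_inverse)
  hence "(2::real) *\<^sub>R z = 0" by (simp add: scaleR_2)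
  thus ?thesis by simp
qed

lemma norm_eq:
  assumes xu: "x \<odot> u = a" and ux: "u \<odot> x = b" and ac: "a \<in> center mul" and bc: "b \<in> center mul"
    and tb: "t \<odot> b = e"
  shows "a = b"
proof -
  have "(x \<odot> u) \<odot> x = x \<odot> (u \<odot> x)" using as0[OF alt2[of x u]] .
  hence "a \<odot> x = x \<odot> b" using xu ux by simp
  hence "x \<odot> a = x \<odot> b" using cen_comm[OF ac] by simp
  hence 1: "x \<odot> (a - b) = 0" by (simp add: mul_diff_right)
  have cn: "a - b \<in> nucleus mul" unfolding nucleus_def
    using nuc1[OF cen_nuc[OF ac]] nuc1[OF cen_nuc[OF bc]] by (simp add: as_diff1)
  have "u \<odot> (x \<odot> (a - b)) = (u \<odot> x) \<odot> (a - b)" using as0[OF nuc3[OF cn]] by simp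
  hence 2: "b \<odot> (a - b) = 0" using 1 ux by simp
  have "t \<odot> (b \<odot> (a - b)) = (t \<odot> b) \<odot> (a - b)" using as0[OF nuc2[OF cen_nuc[OF bc]]] by simp
  hence "a - b = 0" using 2 tb by simp
  thus ?thesis by (simp only: right_minus_eq)
qed

lemma key:
  assumes xu: "x \<odot> u = a" and ux: "u \<odot> x = a" and ac: "a \<in> center mul" and sc: "s \<in> center mul"
    and sa: "s \<odot> a = e"
  shows "as x u y = 0"
proof -
  have an: "a \<in> nucleus mul" using cen_nuc[OF ac] .
  have sn: "s \<in> nucleus mul" using cen_nuc[OF sc] .
  have F1: "x \<odot> (u \<odot> z) = a \<odot> z - as x u z" for z by (simp add: assoc_def xu)
  have S1: "as x u z \<odot> x = 0" for z
  proof -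
    have X: "as (x \<odot> x) u z = x \<odot> as x u z + as x u z \<odot> x" by (rule x2_id)
    have h1: "(x \<odot> x) \<odot> u = a \<odot> x" using as0[OF alt1[of x u]] xu cen_comm[OF ac] by simp
    have h2: "(a \<odot> x) \<odot> z = a \<odot> (x \<odot> z)" using as0[OF nuc1[OF an]] .
    have h3: "(x \<odot> x) \<odot> (u \<odot> z) = x \<odot> (x \<odot> (u \<odot> z))" using as0[OF alt1] .
    have h4: "x \<odot> (a \<odot> z) = a \<odot> (x \<odot> z)" using cm1[OF ac] .
    have "as (x \<odot> x) u z = x \<odot> as x u z"
      unfolding assoc_def[of mul "x \<odot> x"] h1 h2 h3 F1 by (simp add: mul_diff_right h4)
    thus ?thesis using X by simp
  qed
  have S2: "as x u (z \<odot> x) = 0" for z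
  proof -
    have T: "as (z \<odot> x) u x - as z (x \<odot> u) x + as z x (u \<odot> x) = z \<odot> as x u x + as z x u \<odot> x"
      by (rule teich)
    have c: "as z x u = as x u z" by (metis cyc)
    have "as (z \<odot> x) u x = 0" using T c S1[of z] nuc2[OF an, of z x] nuc3[OF an, of z x] xu ux by simp
    moreover have "as (z \<odot> x) u x = - as x u (z \<odot> x)" using cyc[of "z \<odot> x" u x] skew12[of u x] by simp
    ultimately show ?thesis by simp
  qed
  have S3: "z = (s \<odot> (z \<odot> u)) \<odot> x + s \<odot> as x u z" for z
  proof -
    have c: "as z u x = - as x u z" using cyc[of z u x] skew12[of u x z] by simp
    have "(z \<odot> u) \<odot> x = a \<odot> z - as x u z"
      using c unfolding assoc_def[of mul z u x] ux cen_comm[OF ac] by (simp add: algebra_simps)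
    hence "(s \<odot> (z \<odot> u)) \<odot> x = s \<odot> (a \<odot> z) - s \<odot> as x u z"
      using as0[OF nuc1[OF sn]] by (simp add: mul_diff_right)
    moreover have "s \<odot> (a \<odot> z) = z" using as0[OF nuc1[OF sn], of a z] sa by simp
    ultimately show ?thesis by simp
  qed
  define D where "D = as x u y"
  have S4: "D = s \<odot> as x u D"
  proof -
    have "D = as x u ((s \<odot> (y \<odot> u)) \<odot> x + s \<odot> as x u y)" unfolding D_def using S3[of y] by simp
    also have "\<dots> = s \<odot> as x u D" unfolding D_def by (simp add: as_add3 S2 as_c3[OF sc])
    finally show ?thesis .
  qed
  have S5: "as x u D = - (a \<odot> D)"
  proof -
    have "as x u D = as D x u" by (metis cyc)
    also have "\<dots> = (D \<odot> x) \<odot> u - D \<odot> (x \<odot> u)" by (simp only: assoc_def)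
    also have "\<dots> = - (D \<odot> a)" using S1[of y] xu unfolding D_def[symmetric] by simp
    finally show ?thesis using cen_comm[OF ac] by simp
  qed
  have "D = - D"
  proof -
    have "D = s \<odot> (- (a \<odot> D))" using S4 S5 by simp
    also have "\<dots> = - ((s \<odot> a) \<odot> D)" using as0[OF nuc1[OF sn], of a D] by (simp add: mul_minus_right)
    finally show ?thesis using sa by simp
  qed
  thus ?thesis using self_neg D_def by blast
qed


abbreviation CC where "CC \<equiv> central_cone mul e cj"
abbreviation NN where "NN \<equiv> normal_cone mul e cj"
abbreviation nr where "nr \<equiv> nrm mul cj"

lemma nrm0[simp]: "nr 0 = 0" by (simp add: nrm_def)
lemma nrm_cj: "nr (cj x) = cj x \<odot> x" by (simp add: nrm_def)
lemma zero_C: "0 \<in> CC" unfolding central_cone_def by simp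
lemma cjC: "x \<in> CC \<Longrightarrow> cj x \<in> CC" unfolding central_cone_def by auto

lemma C_facts:
  assumes "x \<in> CC" "x \<noteq> 0"
  obtains s where "nr x \<in> center mul" "s \<in> center mul" "nr x \<odot> s = e" "s \<odot> nr x = e"
    "nr (cj x) = nr x" "\<And>y. as x (cj x) y = 0"
proof -
  have "nr x \<in> center_units mul e" "nr (cj x) \<in> center_units mul e"
    using assms unfolding central_cone_def by auto
  then obtain s t where s: "nr x \<in> center mul" "s \<in> center mul" "nr x \<odot> s = e" "s \<odot> nr x = e"
    and t: "nr (cj x) \<in> center mul" "t \<odot> nr (cj x) = e"
    unfolding center_units_def is_inverse_def by blast
  have eq: "nr x = nr (cj x)"
    by (rule norm_eq[of x "cj x" _ _ t]) (use s t in \<open>simp_all add: nrm_def\<close>)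
  have k: "as x (cj x) y = 0" for y
    by (rule key[of x "cj x" "nr x" s]) (use s eq in \<open>simp_all add: nrm_def\<close>)
  show ?thesis using that s eq k by metis
qed

lemma C_inv:
  assumes "x \<in> CC" "x \<noteq> 0" "s \<in> center mul" "s \<odot> nr x = e"
  shows "x \<odot> (s \<odot> cj x) = e" "(s \<odot> cj x) \<odot> x = e" "\<And>z. as x (s \<odot> cj x) z = 0"
proof -
  obtain s' where f: "nr (cj x) = nr x" "\<And>y. as x (cj x) y = 0" using C_facts[OF assms(1,2)] by metis
  show "x \<odot> (s \<odot> cj x) = e" using cm1[OF assms(3)] assms(4) by (simp add: nrm_def)
  show "(s \<odot> cj x) \<odot> x = e" using cm2[OF assms(3)] assms(4) f(1) by (simp add: nrm_cj)
  show "as x (s \<odot> cj x) z = 0" for z using as_c2[OF assms(3)] f(2) by simp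
qed

lemma inv_el_eq:
  assumes "x \<odot> v = e" "v \<odot> x = e" "\<And>z. as v x z = 0"
  shows "inv_el mul e x = v"
  unfolding inv_el_def
proof (rule the_equality)
  show "is_inverse mul e x v" using assms unfolding is_inverse_def by simp
  fix z assume "is_inverse mul e x z"
  hence z: "x \<odot> z = e" "z \<odot> x = e" unfolding is_inverse_def by auto
  have "(v \<odot> x) \<odot> z = v \<odot> (x \<odot> z)" using as0[OF assms(3)] .
  thus "z = v" using z assms by simp
qed

lemma cen_mult: assumes "a \<in> center mul" "b \<in> center mul" shows "a \<odot> b \<in> center mul"
proof -
  have an: "a \<in> nucleus mul" "b \<in> nucleus mul" using assms cen_nuc by auto
  have "as (a \<odot> b) p q = 0" for p q
  proof -
    have "as (a \<odot> b) p q - as a (b \<odot> p) q + as a b (p \<odot> q) = a \<odot> as b p q + as a b p \<odot> q" by (rule teich)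
    thus ?thesis using nuc1[OF an(1)] nuc1[OF an(2)] by simp
  qed
  hence "a \<odot> b \<in> nucleus mul" unfolding nucleus_def by blast
  moreover have "(a \<odot> b) \<odot> p = p \<odot> (a \<odot> b)" for p
    using cm2[OF assms(1)] cm1[OF assms(1)] cen_comm[OF assms(2)] by metis
  ultimately show ?thesis unfolding center_def by blast
qed

lemma cu_mult: assumes "a \<in> center_units mul e" "b \<in> center_units mul e" shows "a \<odot> b \<in> center_units mul e"
proof -
  obtain s t where st: "a \<in> center mul" "b \<in> center mul" "s \<in> center mul" "t \<in> center mul"
    "a \<odot> s = e" "s \<odot> a = e" "b \<odot> t = e" "t \<odot> b = e"
    using assms unfolding center_units_def is_inverse_def by blast
  have "(a \<odot> b) \<odot> (s \<odot> t) = e" using cm2[OF st(1)] cm1[OF st(3)] st by simp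
  moreover have "(s \<odot> t) \<odot> (a \<odot> b) = e" using cm2[OF st(3)] cm1[OF st(1)] st by simp
  ultimately show ?thesis unfolding center_units_def is_inverse_def
    using cen_mult st by blast
qed

lemma cj_as: "cj (as x y z) = - as (cj z) (cj y) (cj x)"
  by (simp add: assoc_def cj_diff cj_mul)

lemma cj_center: assumes "r \<in> center mul" shows "cj r \<in> center mul"
proof -
  have "as (cj r) p q = 0" for p q
  proof -
    have "cj (as (cj q) (cj p) r) = - as (cj r) p q" using cj_as[of "cj q" "cj p" r] by simp
    thus ?thesis using nuc3[OF cen_nuc[OF assms]] by (metis cj_zero neg_equal_0_iff_equal)
  qed
  moreover have "cj r \<odot> p = p \<odot> cj r" for p
    using cj_mul[of "cj p" r] cj_mul[of r "cj p"] cen_comm[OF assms, of "cj p"] by simp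
  ultimately show ?thesis unfolding center_def nucleus_def by blast
qed

lemma cu_cj: assumes "r \<in> center_units mul e" shows "cj r \<in> center_units mul e"
proof -
  obtain s where s: "r \<in> center mul" "s \<in> center mul" "r \<odot> s = e" "s \<odot> r = e"
    using assms unfolding center_units_def is_inverse_def by blast
  have "cj r \<odot> cj s = e" "cj s \<odot> cj r = e" using s cj_mul by (metis cj_e)+
  thus ?thesis unfolding center_units_def is_inverse_def using cj_center s by blast
qed

lemma cu_C: assumes "s \<in> center_units mul e" shows "s \<in> CC"
  unfolding central_cone_def using cu_mult[OF assms cu_cj[OF assms]] cu_mult[OF cu_cj[OF assms] assms]
  by (simp add: nrm_def)

lemma nrm_mult: assumes "x \<in> CC" "y \<in> CC" shows "nr (x \<odot> y) = nr x \<odot> nr y"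
proof (cases "x = 0 \<or> y = 0")
  case True thus ?thesis by auto
next
  case False
  obtain s where fx: "nr x \<in> center mul" "s \<in> center mul" "nr x \<odot> s = e" "s \<odot> nr x = e"
    "nr (cj x) = nr x" "\<And>y. as x (cj x) y = 0" using C_facts[OF assms(1)] False by metis
  obtain t where fy: "nr y \<in> center mul" "t \<in> center mul" "nr y \<odot> t = e" "t \<odot> nr y = e"
    "nr (cj y) = nr y" "\<And>z. as y (cj y) z = 0" using C_facts[OF assms(2)] False by metis
  define u where "u = cj x"
  define w where "w = cj y"
  define a where "a = nr x"
  define b where "b = nr y"
  have xu: "x \<odot> u = a" "u \<odot> x = a" using fx(5) unfolding u_def a_def by (simp_all add: nrm_def)
  have yw: "y \<odot> w = b" unfolding w_def b_def by (simp add: nrm_def)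
  have ac: "a \<in> center mul" "b \<in> center mul" using fx fy a_def b_def by auto
  have au: "as x u z = 0" for z using fx(6) u_def by simp
  have aw: "as y w z = 0" for z using fy(6) w_def by simp
  define Z where "Z = as x y (w \<odot> u)"
  have M: "as x y ((w \<odot> u) \<odot> x) = x \<odot> Z" unfolding Z_def by (rule moufang)
  have "as w u x = 0" using cyc[of w u x] skew12[of u x w] au by simp
  hence "(w \<odot> u) \<odot> x = a \<odot> w" using as0 xu cen_comm[OF ac(1)] by metis
  moreover have "as x y (a \<odot> w) = 0" using as_c3[OF ac(1)] cyc[of x y w] aw by simp
  ultimately have xZ: "x \<odot> Z = 0" using M by simp
  have "as u x Z = 0" using skew12[of u x Z] au by simp
  hence "a \<odot> Z = 0" using as0 xZ xu by (metis mul_zero_right)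
  hence "s \<odot> (a \<odot> Z) = 0" by simp
  hence Z0: "Z = 0" using cm2[OF fx(2), of a Z] fx(4) a_def by simp
  have "nr (x \<odot> y) = (x \<odot> y) \<odot> (w \<odot> u)" unfolding u_def w_def by (simp add: nrm_def cj_mul)
  also have "\<dots> = x \<odot> (y \<odot> (w \<odot> u))" using Z0 Z_def by (simp add: assoc_def)
  also have "y \<odot> (w \<odot> u) = b \<odot> u" using as0[OF aw[of u]] yw by simp
  also have "x \<odot> (b \<odot> u) = b \<odot> a" using cm1[OF ac(2)] xu by simp
  also have "\<dots> = a \<odot> b" using cen_comm[OF ac(2)] by simp
  finally show ?thesis unfolding a_def b_def .
qed

lemma nrm_comm: assumes "x \<in> CC" "y \<in> CC" shows "nr x \<odot> nr y = nr y \<odot> nr x"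
proof (cases "x = 0")
  case True thus ?thesis by simp
next
  case False
  then obtain s where "nr x \<in> center mul" using C_facts[OF assms(1)] by metis
  thus ?thesis using cen_comm by blast
qed

lemma C_closed: assumes "x \<in> CC" "y \<in> CC" shows "x \<odot> y \<in> CC"
proof (cases "x = 0 \<or> y = 0")
  case True thus ?thesis using zero_C by auto
next
  case False
  have cu: "nr z \<in> center_units mul e" if "z \<in> CC" "z \<noteq> 0" for z
    using that unfolding central_cone_def by auto
  have "nr (x \<odot> y) \<in> center_units mul e" using nrm_mult[OF assms] cu assms False cu_mult by simp
  moreover have "nr (cj (x \<odot> y)) \<in> center_units mul e"
  proof -
    have "nr (cj (x \<odot> y)) = nr (cj y) \<odot> nr (cj x)" using nrm_mult[OF cjC[OF assms(2)] cjC[OF assms(1)]]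
      by (simp add: cj_mul)
    moreover have "cj x \<noteq> 0" "cj y \<noteq> 0" using False by (metis cj_cj cj_zero)+
    ultimately show ?thesis using cu cjC assms cu_mult by simp
  qed
  ultimately show ?thesis unfolding central_cone_def by simp
qed

lemma scal_center: "r *\<^sub>R e \<in> center mul"
proof -
  have "as (r *\<^sub>R e) p q = 0" for p q by (simp add: assoc_def mul_scale_left)
  moreover have "(r *\<^sub>R e) \<odot> p = p \<odot> (r *\<^sub>R e)" for p by (simp add: mul_scale_left mul_scale_right)
  ultimately show ?thesis unfolding center_def nucleus_def by blast
qed

lemma scal_cu: assumes "r \<noteq> 0" shows "r *\<^sub>R e \<in> center_units mul e"
proof -
  have "(r *\<^sub>R e) \<odot> ((1/r) *\<^sub>R e) = e" "((1/r) *\<^sub>R e) \<odot> (r *\<^sub>R e) = e"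
    using assms by (simp_all add: mul_scale_left mul_scale_right)
  thus ?thesis unfolding center_units_def is_inverse_def using scal_center by blast
qed

lemma N_C: assumes "x \<in> NN" shows "x \<in> CC"
  using assms scal_cu unfolding normal_cone_def central_cone_def by auto

lemma N_cj: "x \<in> NN \<Longrightarrow> cj x \<in> NN" unfolding normal_cone_def by auto

lemma N_closed: assumes "x \<in> NN" "y \<in> NN" shows "x \<odot> y \<in> NN"
proof (cases "x = 0 \<or> y = 0")
  case True thus ?thesis unfolding normal_cone_def by auto
next
  case False
  obtain r1 r2 r3 r4 where r: "nr x = r1 *\<^sub>R e" "nr (cj x) = r2 *\<^sub>R e" "nr y = r3 *\<^sub>R e"
    "nr (cj y) = r4 *\<^sub>R e" "r1 \<noteq> 0" "r2 \<noteq> 0" "r3 \<noteq> 0" "r4 \<noteq> 0"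
    using assms False unfolding normal_cone_def by auto
  have "nr (x \<odot> y) = (r1 * r3) *\<^sub>R e" using nrm_mult[OF N_C[OF assms(1)] N_C[OF assms(2)]] r
    by (simp add: mul_scale_left mul_scale_right)
  moreover have "nr (cj (x \<odot> y)) = (r4 * r2) *\<^sub>R e"
    using nrm_mult[OF N_C[OF N_cj[OF assms(2)]] N_C[OF N_cj[OF assms(1)]]] r
    by (simp add: mul_scale_left mul_scale_right cj_mul)
  ultimately show ?thesis unfolding normal_cone_def using r by auto
qed

lemma N_scale: assumes "x \<in> NN" "t \<noteq> 0" shows "t *\<^sub>R x \<in> NN"
proof (cases "x = 0")
  case True thus ?thesis using assms by simp
next
  case False
  then obtain r1 r2 where r: "nr x = r1 *\<^sub>R e" "nr (cj x) = r2 *\<^sub>R e" "r1 \<noteq> 0" "r2 \<noteq> 0"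
    using assms unfolding normal_cone_def by auto
  have "nr (t *\<^sub>R x) = (t * t * r1) *\<^sub>R e" "nr (cj (t *\<^sub>R x)) = (t * t * r2) *\<^sub>R e"
    using r by (simp_all add: nrm_def cj_scale mul_scale_left mul_scale_right)
  thus ?thesis unfolding normal_cone_def using r assms by auto
qed

lemma loop_gen:
  assumes cl: "\<forall>a\<in>L. \<forall>b\<in>L. a \<odot> b \<in> L" and eL: "e \<in> L"
    and inv: "\<And>a. a \<in> L \<Longrightarrow> \<exists>v\<in>L. a \<odot> v = e \<and> v \<odot> a = e \<and> (\<forall>z. as a v z = 0)"
  shows "is_loop L mul"
  unfolding is_loop_def
proof (intro conjI)
  show "\<forall>a\<in>L. \<forall>b\<in>L. a \<odot> b \<in> L" by (rule cl)
  show "\<exists>u\<in>L. \<forall>a\<in>L. u \<odot> a = a \<and> a \<odot> u = a" using eL e_left e_right by blast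
  show "\<forall>a\<in>L. \<forall>b\<in>L. (\<exists>!x. x \<in> L \<and> a \<odot> x = b) \<and> (\<exists>!y. y \<in> L \<and> y \<odot> a = b)"
  proof (intro ballI conjI)
  fix a b assume a: "a \<in> L" and b: "b \<in> L"
  obtain v where v: "v \<in> L" "a \<odot> v = e" "v \<odot> a = e" "\<And>z. as a v z = 0" using inv[OF a] by blast
  have z1: "as v a z = 0" for z using skew12[of v a z] v(4) by simp
  have z2: "as z v a = 0" for z using cyc[of z v a] cyc[of v a z] z1 by simp
  have z3: "as z a v = 0" for z using cyc[of z a v] cyc[of a v z] v(4) by simp
  show "\<exists>!x. x \<in> L \<and> a \<odot> x = b"
  proof (rule ex1I[of _ "v \<odot> b"])
    show "v \<odot> b \<in> L \<and> a \<odot> (v \<odot> b) = b" using cl v b as0[OF v(4)[of b]] by simp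
    fix x assume "x \<in> L \<and> a \<odot> x = b"
    thus "x = v \<odot> b" using as0[OF z1[of x]] v by auto
  qed
  show "\<exists>!y. y \<in> L \<and> y \<odot> a = b"
  proof (rule ex1I[of _ "b \<odot> v"])
    show "b \<odot> v \<in> L \<and> (b \<odot> v) \<odot> a = b" using cl v b as0[OF z2[of b]] by simp
    fix y assume "y \<in> L \<and> y \<odot> a = b"
    thus "y = b \<odot> v" using as0[OF z3[of y]] v by auto
  qed
qed
qed


lemma nrm_e: "nr e = e" by (simp add: nrm_def)
lemma e_C: "e \<in> CC" unfolding central_cone_def using scal_cu[of 1] by (simp add: nrm_e)
lemma e_N: "e \<in> NN" unfolding normal_cone_def using nrm_e by (auto intro: exI[of _ 1])

lemma nz_prod: assumes "x \<in> CC" "y \<in> CC" "x \<noteq> 0" "y \<noteq> 0" shows "x \<odot> y \<noteq> 0"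
proof
  assume h: "x \<odot> y = 0"
  obtain s where f: "s \<in> center mul" "s \<odot> nr x = e" using C_facts[OF assms(1,3)] by metis
  note i = C_inv[OF assms(1,3) f]
  have "as (s \<odot> cj x) x y = 0" using skew12[of "s \<odot> cj x" x y] i(3) by simp
  hence "y = (s \<odot> cj x) \<odot> (x \<odot> y)" using as0 i(2) by (metis e_left)
  thus False using h assms(4) by simp
qed

lemma loop_C: "is_loop (CC - {0}) mul"
proof (rule loop_gen)
  show "\<forall>a\<in>CC - {0}. \<forall>b\<in>CC - {0}. a \<odot> b \<in> CC - {0}" using C_closed nz_prod by auto
  show "e \<in> CC - {0}" using e_C e_nz by simp
  fix a assume a: "a \<in> CC - {0}"
  obtain s where f: "nr a \<in> center mul" "s \<in> center mul" "nr a \<odot> s = e" "s \<odot> nr a = e"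
    using C_facts a by blast
  note i = C_inv[of a s] 
  have scu: "s \<in> center_units mul e" unfolding center_units_def is_inverse_def using f by blast
  have "s \<odot> cj a \<in> CC" using C_closed[OF cu_C[OF scu] cjC] a by simp
  moreover have "s \<odot> cj a \<noteq> 0" using i a f e_nz by (metis DiffD1 DiffD2 insertI1 mul_zero_right)
  ultimately show "\<exists>v\<in>CC - {0}. a \<odot> v = e \<and> v \<odot> a = e \<and> (\<forall>z. as a v z = 0)"
    using i a f by blast
qed

lemma loop_N: "is_loop (NN - {0}) mul"
proof (rule loop_gen)
  show "\<forall>a\<in>NN - {0}. \<forall>b\<in>NN - {0}. a \<odot> b \<in> NN - {0}" using N_closed nz_prod N_C by auto
  show "e \<in> NN - {0}" using e_N e_nz by simp
  fix a assume a: "a \<in> NN - {0}"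
  then obtain r where r: "nr a = r *\<^sub>R e" "r \<noteq> 0" unfolding normal_cone_def by auto
  define s where "s = (1/r) *\<^sub>R e"
  have f: "s \<in> center mul" "s \<odot> nr a = e" unfolding s_def using scal_center r
    by (simp_all add: mul_scale_left)
  have aC: "a \<in> CC" "a \<noteq> 0" using a N_C by auto
  note i = C_inv[OF aC f]
  have "s \<odot> cj a = (1/r) *\<^sub>R cj a" unfolding s_def by (simp add: mul_scale_left)
  hence "s \<odot> cj a \<in> NN" using N_scale[OF N_cj] a r by simp
  moreover have "s \<odot> cj a \<noteq> 0" using i e_nz by (metis mul_zero_right)
  ultimately show "\<exists>v\<in>NN - {0}. a \<odot> v = e \<and> v \<odot> a = e \<and> (\<forall>z. as a v z = 0)"
    using i by blast
qed

lemma part1: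
  assumes x: "x \<in> CC"
  shows "nr x = nr (cj x)
      \<and> (x \<noteq> 0 \<longrightarrow> invertible_el mul e x \<and> inv_el mul e x = inv_el mul e (nr x) \<odot> cj x)
      \<and> (\<forall>y. as x (cj x) y = 0)
      \<and> (\<forall>y \<in> CC. nr (x \<odot> y) = nr x \<odot> nr y \<and> nr x \<odot> nr y = nr y \<odot> nr x
          \<and> nr y \<odot> nr x = nr (y \<odot> x))"
proof (cases "x = 0")
  case True thus ?thesis using nrm_mult zero_C by (simp add: nrm_def)
next
  case False
  obtain s where f: "nr x \<in> center mul" "s \<in> center mul" "nr x \<odot> s = e" "s \<odot> nr x = e"
    "nr (cj x) = nr x" "\<And>y. as x (cj x) y = 0" using C_facts[OF x False] by metis
  note i = C_inv[OF x False f(2) f(4)]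
  have z: "as (s \<odot> cj x) x z = 0" for z using skew12[of "s \<odot> cj x" x z] i(3) by simp
  have ie: "inv_el mul e x = s \<odot> cj x" by (rule inv_el_eq) (use i z in auto)
  have isf: "inv_el mul e (nr x) = s" by (rule inv_el_eq) (use f nuc2[OF cen_nuc[OF f(1)]] in auto)
  have inv: "invertible_el mul e x" unfolding invertible_el_def is_inverse_def using i by blast
  show ?thesis using f ie isf inv nrm_mult[OF x] nrm_mult[OF _ x] nrm_comm[OF x] False by auto
qed

end

theorem theorem1p7:
  fixes mul :: "'a::real_vector \<Rightarrow> 'a \<Rightarrow> 'a" and e :: 'a and cj :: "'a \<Rightarrow> 'a"
  assumes A: "alt_star_alg mul e cj"
  shows
    "(\<forall>x \<in> central_cone mul e cj.
        nrm mul cj x = nrm mul cj (cj x)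
      \<and> (x \<noteq> 0 \<longrightarrow> invertible_el mul e x \<and>
            inv_el mul e x = mul (inv_el mul e (nrm mul cj x)) (cj x))
      \<and> (\<forall>y. assoc mul x (cj x) y = 0)
      \<and> (\<forall>y \<in> central_cone mul e cj.
            nrm mul cj (mul x y) = mul (nrm mul cj x) (nrm mul cj y)
          \<and> mul (nrm mul cj x) (nrm mul cj y) = mul (nrm mul cj y) (nrm mul cj x)
          \<and> mul (nrm mul cj y) (nrm mul cj x) = nrm mul cj (mul y x)))
   \<and> (\<forall>x \<in> central_cone mul e cj. \<forall>y \<in> central_cone mul e cj. mul x y \<in> central_cone mul e cj)
   \<and> (\<forall>x \<in> normal_cone mul e cj. \<forall>y \<in> normal_cone mul e cj. mul x y \<in> normal_cone mul e cj)
   \<and> is_loop (central_cone mul e cj - {0}) mul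
   \<and> is_loop (normal_cone mul e cj - {0}) mul"
proof -
  interpret asa mul e cj by unfold_locales (rule A)
  show ?thesis using part1 C_closed N_closed loop_C loop_N by blast
qed

end
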